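(* In the biased controlled social learning model described in the context, for all $b_1,b_2\in[0,1]$ with $b_1\le b_2$, $V^*_B(b_1)\le V^*_B(b_2)$.
   Context: A binary state $\omega\in\{G,B\}$ is drawn once. Agents $i=1,2,\dots$ act in sequence; a planner chooses precision $q_i\in[0.5,1]$ and agent $i$ receives a private signal $s_i$ with $\mathbb{P}(s_i=\omega)=q_i$, conditionally independent given $\omega$. Let $y(b,q)=1+2bq-b-q$, $z(b,q)=b+q-2bq$. With public belief $b_i$, agent $i$ takes $a_i=s_i$ if $1-q_i\le b_i\le q_i$, $G$ if $b_i>q_i$, $B$ if $b_i<1-q_i$; the public belief becomes $\frac{q_ib_i}{y(b_i,q_i)}$ (if $s_i=G$) or $\frac{(1-q_i)b_i}{z(b_i,q_i)}$ (if $s_i=B$) when $1-q_i\le b_i\le q_i$, and stays $b_i$ otherwise. The biased planner (who wants action $G$) has baseline $p\in[0.5,1)$, cost $\beta:[0,1]\to[0,\infty)$ non-negative, increasing, continuous, concave with $\beta(0)=0$, $C>0$, and instantaneous reward $r_B(b,q)=-\beta(|q-p|)-C\,\mathbb{P}(a_i=B\mid b,q)$. Policies are deterministic Markov maps $\pi:[0,1]\to[0.5,1]$; for $\delta\in[0,1)$, $V^\pi_B(b)=\mathbb{E}[\sum_{i\ge1}\delta^{i-1}r_B(b_i,\pi(b_i))\mid b_1=b]$ and $V^*_B=\sup_\pi V^\pi_B$. *)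

theory Defs
  imports "HOL-Probability.Probability"
begin

definition yy :: "real \<Rightarrow> real \<Rightarrow> real" where
  "yy b q = 1 + 2*b*q - b - q"

definition zz :: "real \<Rightarrow> real \<Rightarrow> real" where
  "zz b q = b + q - 2*b*q"

definition probB :: "real \<Rightarrow> real \<Rightarrow> real" where
  "probB b q = (if 1 - q \<le> b \<and> b \<le> q then zz b q else if b > q then 0 else 1)"

definition rB :: "(real \<Rightarrow> real) \<Rightarrow> real \<Rightarrow> real \<Rightarrow> real \<Rightarrow> real \<Rightarrow> real" where
  "rB \<beta> p C b q = - \<beta> \<bar>q - p\<bar> - C * probB b q"

text \<open>One-step transition of the public belief (signal s = G with probability y(b,q)).\<close>
definition trans :: "real \<Rightarrow> real \<Rightarrow> real pmf" where
  "trans b q = (if 1 - q \<le> b \<and> b \<le> q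
     then map_pmf (\<lambda>s. if s then q * b / yy b q else (1 - q) * b / zz b q) (bernoulli_pmf (yy b q))
     else return_pmf b)"

text \<open>Distribution of the public belief b_{n+1} under policy pi, starting at b_1 = b.\<close>
primrec belief_dist :: "(real \<Rightarrow> real) \<Rightarrow> real \<Rightarrow> nat \<Rightarrow> real pmf" where
  "belief_dist \<pi> b 0 = return_pmf b"
| "belief_dist \<pi> b (Suc n) = bind_pmf (belief_dist \<pi> b n) (\<lambda>b'. trans b' (\<pi> b'))"

definition policies :: "(real \<Rightarrow> real) set" where
  "policies = {\<pi>. \<forall>b\<in>{0..1}. \<pi> b \<in> {1/2..1}}"

definition VB :: "(real \<Rightarrow> real) \<Rightarrow> real \<Rightarrow> real \<Rightarrow> real \<Rightarrow> (real \<Rightarrow> real) \<Rightarrow> real \<Rightarrow> real" where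
  "VB \<beta> p C \<delta> \<pi> b =
     (\<Sum>i. \<delta> ^ i * measure_pmf.expectation (belief_dist \<pi> b i) (\<lambda>b'. rB \<beta> p C b' (\<pi> b')))"

definition VB_opt :: "(real \<Rightarrow> real) \<Rightarrow> real \<Rightarrow> real \<Rightarrow> real \<Rightarrow> real \<Rightarrow> real" where
  "VB_opt \<beta> p C \<delta> b = (SUP \<pi>\<in>policies. VB \<beta> p C \<delta> \<pi> b)"

end

theory Submission
  imports Defs
begin


lemma integral_bind_pmf_bounded:
  fixes f :: "'b \<Rightarrow> real"
  assumes "\<And>x. \<bar>f x\<bar> \<le> B"
  shows "measure_pmf.expectation (bind_pmf M N) f = measure_pmf.expectation M (\<lambda>x. measure_pmf.expectation (N x) f)"
  using measurable_measure_pmf[of N] unfolding measure_pmf_bind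
  apply (subst integral_bind[where K="count_space UNIV" and B=B and B'=1])
  using assms apply (auto intro!: prob_space_imp_subprob_space)
  done

definition fol :: "real \<Rightarrow> real \<Rightarrow> bool" where "fol b q \<longleftrightarrow> 1 - q \<le> b \<and> b \<le> q"
definition pG :: "real \<Rightarrow> real \<Rightarrow> real" where "pG b q = q * b / yy b q"
definition pB :: "real \<Rightarrow> real \<Rightarrow> real" where "pB b q = (1 - q) * b / zz b q"
definition ET :: "real \<Rightarrow> real \<Rightarrow> (real \<Rightarrow> real) \<Rightarrow> real" where
  "ET b q W = (if fol b q then yy b q * W (pG b q) + (1 - yy b q) * W (pB b q) else W b)"

lemma yy_bounds: "b \<in> {0..1} \<Longrightarrow> q \<in> {0..1} \<Longrightarrow> 0 \<le> yy b q \<and> yy b q \<le> 1"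
proof -
  assume a: "b \<in> {0..1}" "q \<in> {0..1}"
  have e: "yy b q = q*b + (1-q)*(1-b)" unfolding yy_def by algebra
  have "q*b \<le> q" "(1-q)*(1-b) \<le> 1-q" using a by (auto intro: mult_left_le mult_right_le_one_le)
  moreover have "(1-q)*(1-b) \<ge> 0" "q*b \<ge> 0" using a by auto
  ultimately show ?thesis unfolding e by linarith
qed

lemma zz_eq: "zz b q = 1 - yy b q" unfolding yy_def zz_def by simp

lemma pG_bounds: assumes "b \<in> {0..1}" "q \<in> {0..1}" shows "pG b q \<in> {0..1}"
proof -
  have "yy b q = q*b + (1-q)*(1-b)" unfolding yy_def by algebra
  moreover have "(1-q)*(1-b) \<ge> 0" "q*b \<ge> 0" using assms by auto
  ultimately have "q*b \<le> yy b q" "0 \<le> yy b q" by auto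
  then show ?thesis unfolding pG_def using assms
    by (cases "yy b q = 0") (auto simp: divide_le_eq_1)
qed

lemma pB_bounds: assumes "b \<in> {0..1}" "q \<in> {0..1}" shows "pB b q \<in> {0..1}"
proof -
  have "zz b q = (1-q)*b + q*(1-b)" unfolding zz_def by algebra
  moreover have "(1-q)*b \<ge> 0" "q*(1-b) \<ge> 0" using assms by auto
  ultimately have "(1-q)*b \<le> zz b q" "0 \<le> zz b q" by auto
  then show ?thesis unfolding pB_def using assms
    by (cases "zz b q = 0") (auto simp: divide_le_eq_1)
qed

lemma set_trans: assumes "b \<in> {0..1}" "q \<in> {0..1}" shows "set_pmf (trans b q) \<subseteq> {0..1}"
  using pG_bounds[OF assms] pB_bounds[OF assms] assms unfolding trans_def pG_def pB_def
  by auto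

lemma ET_trans: assumes "b \<in> {0..1}" "q \<in> {0..1}"
  shows "measure_pmf.expectation (trans b q) W = ET b q W"
  using yy_bounds[OF assms] unfolding trans_def ET_def fol_def pG_def pB_def
  by (auto simp: algebra_simps)

lemma ET_mono: assumes "b \<in> {0..1}" "q \<in> {0..1}" "\<And>x. x \<in> {0..1} \<Longrightarrow> W1 x \<le> W2 x"
  shows "ET b q W1 \<le> ET b q W2"
proof -
  have y: "0 \<le> yy b q" "yy b q \<le> 1" using yy_bounds[OF assms(1,2)] by auto
  show ?thesis unfolding ET_def
    using assms(3)[OF pG_bounds[OF assms(1,2)]] assms(3)[OF pB_bounds[OF assms(1,2)]] assms(3)[OF assms(1)] y
    by (auto intro!: add_mono mult_left_mono)
qed

lemma ET_const: "ET b q (\<lambda>_. m) = m" unfolding ET_def by (simp add: algebra_simps)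

lemma ET_diff: "ET b q (\<lambda>x. W1 x - W2 x) = ET b q W1 - ET b q W2" unfolding ET_def by (simp add: algebra_simps)


lemma belief_dist_Suc': "belief_dist \<pi> b (Suc n) = bind_pmf (trans b (\<pi> b)) (\<lambda>b'. belief_dist \<pi> b' n)"
proof (induction n arbitrary: b)
  case 0
  then show ?case by (simp add: bind_return_pmf bind_return_pmf')
next
  case (Suc n)
  have "belief_dist \<pi> b (Suc (Suc n)) = bind_pmf (belief_dist \<pi> b (Suc n)) (\<lambda>b'. trans b' (\<pi> b'))" by simp
  also have "\<dots> = bind_pmf (trans b (\<pi> b)) (\<lambda>b'. bind_pmf (belief_dist \<pi> b' n) (\<lambda>b'. trans b' (\<pi> b')))"
    using Suc by (simp add: bind_assoc_pmf)
  finally show ?case by simp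
qed

lemma pol_range: assumes "\<pi> \<in> policies" "x \<in> {0..1}" shows "1/2 \<le> \<pi> x" "\<pi> x \<le> 1" "\<pi> x \<in> {0..1}"
proof -
  have "\<pi> x \<in> {1/2..1}" using assms unfolding policies_def by blast
  then show "1/2 \<le> \<pi> x" "\<pi> x \<le> 1" "\<pi> x \<in> {0..1}" by auto
qed

lemma belief_dist_supp: assumes "\<pi> \<in> policies" "b \<in> {0..1}" shows "set_pmf (belief_dist \<pi> b n) \<subseteq> {0..1}"
proof (induction n)
  case 0 then show ?case using assms by simp
next
  case (Suc n)
  have *: "\<And>x. x \<in> {0..1} \<Longrightarrow> set_pmf (trans x (\<pi> x)) \<subseteq> {0..1}"
    using assms(1) pol_range by (intro set_trans) auto
  show ?case
  proof
    fix x assume "x \<in> set_pmf (belief_dist \<pi> b (Suc n))"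
    then obtain z where z: "z \<in> set_pmf (belief_dist \<pi> b n)" "x \<in> set_pmf (trans z (\<pi> z))" by auto
    then have "z \<in> {0..1}" using Suc by blast
    then show "x \<in> {0..1}" using z(2) * by blast
  qed
qed

lemma coup:
  fixes V :: "real \<Rightarrow> real"
  assumes "0 \<le> a1" "a1 \<le> a2" "a2 \<le> 1"
    and "a1 > 0 \<Longrightarrow> V g2 - V g1 \<ge> -D" "a2 < 1 \<Longrightarrow> V h2 - V h1 \<ge> -D" "a1 < a2 \<Longrightarrow> V g2 - V h1 \<ge> -D"
  shows "(a2 * V g2 + (1-a2) * V h2) - (a1 * V g1 + (1-a1) * V h1) \<ge> -D"
proof -
  have e: "(a2 * V g2 + (1-a2) * V h2) - (a1 * V g1 + (1-a1) * V h1)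
     = a1 * (V g2 - V g1) + (1-a2) * (V h2 - V h1) + (a2 - a1) * (V g2 - V h1)" by algebra
  have 1: "a1 * (V g2 - V g1) \<ge> a1 * (-D)"
  proof (cases "a1 = 0")
    case False then show ?thesis using assms by (intro mult_left_mono) auto
  qed simp
  have 2: "(1-a2) * (V h2 - V h1) \<ge> (1-a2) * (-D)"
  proof (cases "a2 = 1")
    case False then show ?thesis using assms by (intro mult_left_mono) auto
  qed simp
  have 3: "(a2-a1) * (V g2 - V h1) \<ge> (a2-a1) * (-D)"
  proof (cases "a1 = a2")
    case False then show ?thesis using assms by (intro mult_left_mono) auto
  qed simp
  show ?thesis unfolding e using 1 2 3 by (simp add: algebra_simps)
qed



locale plan =
  fixes \<beta> :: "real \<Rightarrow> real" and p C \<delta> :: real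
  assumes p1: "1/2 \<le> p" and p2: "p < 1"
    and bnn: "\<forall>x\<in>{0..1}. \<beta> x \<ge> 0"
    and bmono: "mono_on {0..1} \<beta>"
    and b0: "\<beta> 0 = 0"
    and Cpos: "C > 0"
    and d1: "0 \<le> \<delta>" and d2: "\<delta> < 1"
begin

definition K where "K = \<beta> (1/2) + C"
definition ft where "ft \<pi> x = (if x \<in> {0..1} then rB \<beta> p C x (\<pi> x) else 0)"
definition EE where "EE \<pi> b n = measure_pmf.expectation (belief_dist \<pi> b n) (ft \<pi>)"
definition Q where "Q W b q = rB \<beta> p C b q + \<delta> * ET b q W"
abbreviation Vs where "Vs \<equiv> VB_opt \<beta> p C \<delta>"

lemma probB_bounds: assumes "b \<in> {0..1}" "q \<in> {0..1}" shows "0 \<le> probB b q" "probB b q \<le> 1"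
  using yy_bounds[OF assms] zz_eq[of b q] unfolding probB_def by auto

lemma rB_bounds: assumes "b \<in> {0..1}" "q \<in> {1/2..1}"
  shows "rB \<beta> p C b q \<le> 0" "- K \<le> rB \<beta> p C b q"
proof -
  have q: "q \<in> {0..1}" using assms by auto
  have a: "\<bar>q - p\<bar> \<in> {0..1}" "\<bar>q - p\<bar> \<le> 1/2" using assms p1 p2 by (cases "q \<le> p", auto)+
  have "\<beta> \<bar>q - p\<bar> \<ge> 0" using bnn a by auto
  moreover have "\<beta> \<bar>q - p\<bar> \<le> \<beta> (1/2)" using bmono a by (auto intro: mono_onD)
  moreover note probB_bounds[OF assms(1) q]
  moreover have "C * probB b q \<le> C" "C * probB b q \<ge> 0" using probB_bounds[OF assms(1) q] Cpos by (auto intro: mult_left_le)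
  ultimately show "rB \<beta> p C b q \<le> 0" "- K \<le> rB \<beta> p C b q"
    unfolding rB_def K_def by linarith+
qed

lemma K_nn: "K \<ge> 0"
  using rB_bounds[of 0 1] by simp

lemma ft_bounds: assumes "\<pi> \<in> policies" shows "ft \<pi> x \<le> 0" "- K \<le> ft \<pi> x" "\<bar>ft \<pi> x\<bar> \<le> K"
  using rB_bounds[of x "\<pi> x"] pol_range[OF assms, of x] K_nn unfolding ft_def by auto

lemma EE_bounds: assumes "\<pi> \<in> policies" shows "EE \<pi> b n \<le> 0" "- K \<le> EE \<pi> b n"
proof -
  have int: "integrable (measure_pmf (belief_dist \<pi> b n)) (ft \<pi>)"
    using ft_bounds(3)[OF assms] by (intro measure_pmf.integrable_const_bound[where B=K]) auto
  have "measure_pmf.expectation (belief_dist \<pi> b n) (ft \<pi>) \<le> measure_pmf.expectation (belief_dist \<pi> b n) (\<lambda>x. 0)"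
    using ft_bounds(1)[OF assms] int by (intro integral_mono) auto
  then show "EE \<pi> b n \<le> 0" unfolding EE_def by simp
  have "measure_pmf.expectation (belief_dist \<pi> b n) (\<lambda>x. - K) \<le> measure_pmf.expectation (belief_dist \<pi> b n) (ft \<pi>)"
    using ft_bounds(2)[OF assms] int by (intro integral_mono) auto
  then show "- K \<le> EE \<pi> b n" unfolding EE_def by simp
qed

lemma summ: assumes "\<pi> \<in> policies" shows "summable (\<lambda>i. \<delta>^i * EE \<pi> b i)"
proof (rule summable_comparison_test')
  show "summable (\<lambda>i. K * \<delta>^i)" using d1 d2 by (intro summable_mult summable_geometric) auto
  fix n
  have "\<bar>EE \<pi> b n\<bar> \<le> K" using EE_bounds[OF assms, of b n] by auto
  then show "norm (\<delta>^n * EE \<pi> b n) \<le> K * \<delta>^n" using d1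
    by (simp add: abs_mult mult.commute) (intro mult_left_mono, auto)
qed

lemma VB_eq: assumes "\<pi> \<in> policies" "b \<in> {0..1}" shows "VB \<beta> p C \<delta> \<pi> b = (\<Sum>i. \<delta>^i * EE \<pi> b i)"
proof -
  have "\<And>i. measure_pmf.expectation (belief_dist \<pi> b i) (\<lambda>b'. rB \<beta> p C b' (\<pi> b')) = EE \<pi> b i"
    unfolding EE_def using belief_dist_supp[OF assms]
    by (intro integral_cong_AE) (auto intro!: AE_pmfI simp: ft_def subset_iff)
  then show ?thesis unfolding VB_def by simp
qed

lemma VB_bounds: assumes "\<pi> \<in> policies" "b \<in> {0..1}" shows "VB \<beta> p C \<delta> \<pi> b \<le> 0" "- K / (1 - \<delta>) \<le> VB \<beta> p C \<delta> \<pi> b"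
proof -
  show "VB \<beta> p C \<delta> \<pi> b \<le> 0" unfolding VB_eq[OF assms]
    using suminf_le[of "\<lambda>i. \<delta>^i * EE \<pi> b i" "\<lambda>_. 0"] summ[OF assms(1)] EE_bounds(1)[OF assms(1)] d1
    by (simp add: mult_nonneg_nonpos)
  have s: "summable (\<lambda>i. \<delta>^i * (-K))" using d1 d2 by (intro summable_mult2 summable_geometric) auto
  have "\<And>i. \<delta>^i * (-K) \<le> \<delta>^i * EE \<pi> b i" using EE_bounds(2)[OF assms(1)] d1 by (intro mult_left_mono) auto
  then have "(\<Sum>i. \<delta>^i * (- K)) \<le> (\<Sum>i. \<delta>^i * EE \<pi> b i)"
    using suminf_le[OF _ s summ[OF assms(1)]] by blast
  moreover have "(\<Sum>i. \<delta>^i * (- K)) = - K / (1 - \<delta>)"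
    using suminf_mult2[of "\<lambda>i. \<delta>^i" "-K"] suminf_geometric[of \<delta>] summable_geometric[of \<delta>] d1 d2 by simp
  ultimately show "- K / (1 - \<delta>) \<le> VB \<beta> p C \<delta> \<pi> b" unfolding VB_eq[OF assms] by simp
qed

end

context plan begin

lemma EE_0: "EE \<pi> b 0 = ft \<pi> b" unfolding EE_def by simp

lemma EE_Suc: assumes "\<pi> \<in> policies" "b \<in> {0..1}"
  shows "EE \<pi> b (Suc n) = ET b (\<pi> b) (\<lambda>b'. EE \<pi> b' n)"
proof -
  have "EE \<pi> b (Suc n) = measure_pmf.expectation (trans b (\<pi> b)) (\<lambda>b'. EE \<pi> b' n)"
    unfolding EE_def belief_dist_Suc'
    by (rule integral_bind_pmf_bounded[where B=K]) (rule ft_bounds(3)[OF assms(1)])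
  also have "\<dots> = ET b (\<pi> b) (\<lambda>b'. EE \<pi> b' n)"
    using assms pol_range by (intro ET_trans) auto
  finally show ?thesis .
qed

lemma VB_rec: assumes "\<pi> \<in> policies" "b \<in> {0..1}"
  shows "VB \<beta> p C \<delta> \<pi> b = rB \<beta> p C b (\<pi> b) + \<delta> * ET b (\<pi> b) (VB \<beta> p C \<delta> \<pi>)"
proof -
  define q where "q = \<pi> b"
  have q: "q \<in> {0..1}" using pol_range[OF assms] q_def by auto
  have sp: "(\<Sum>n. \<delta>^(Suc n) * EE \<pi> b (Suc n)) = (\<Sum>n. \<delta>^n * EE \<pi> b n) - \<delta>^0 * EE \<pi> b 0"
    using suminf_split_head[OF summ[OF assms(1)]] by simp
  have f0: "\<delta>^0 * EE \<pi> b 0 = rB \<beta> p C b q" using assms(2) unfolding EE_0 ft_def q_def by simp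
  have tail: "(\<Sum>n. \<delta>^(Suc n) * EE \<pi> b (Suc n)) = \<delta> * ET b q (VB \<beta> p C \<delta> \<pi>)"
  proof (cases "fol b q")
    case True
    define G where "G = pG b q"
    define B where "B = pB b q"
    define a where "a = yy b q"
    have G: "G \<in> {0..1}" and B: "B \<in> {0..1}" using pG_bounds[OF assms(2) q] pB_bounds[OF assms(2) q] G_def B_def by auto
    have e: "\<And>n. \<delta>^(Suc n) * EE \<pi> b (Suc n) = (\<delta> * a) * (\<delta>^n * EE \<pi> G n) + (\<delta> * (1 - a)) * (\<delta>^n * EE \<pi> B n)"
      unfolding EE_Suc[OF assms] q_def[symmetric] ET_def G_def B_def a_def using True by (simp add: algebra_simps)
    have "(\<Sum>n. \<delta>^(Suc n) * EE \<pi> b (Suc n)) = (\<delta> * a) * (\<Sum>n. \<delta>^n * EE \<pi> G n) + (\<delta> * (1 - a)) * (\<Sum>n. \<delta>^n * EE \<pi> B n)"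
      unfolding e using summ[OF assms(1)]
      by (subst suminf_add[symmetric]) (auto intro!: summable_mult simp: suminf_mult)
    also have "\<dots> = \<delta> * ET b q (VB \<beta> p C \<delta> \<pi>)"
    proof -
      have "ET b q (VB \<beta> p C \<delta> \<pi>) = a * VB \<beta> p C \<delta> \<pi> G + (1 - a) * VB \<beta> p C \<delta> \<pi> B"
        unfolding ET_def G_def B_def a_def using True by simp
      then have h: "ET b q (VB \<beta> p C \<delta> \<pi>) = a * (\<Sum>n. \<delta>^n * EE \<pi> G n) + (1 - a) * (\<Sum>n. \<delta>^n * EE \<pi> B n)"
        unfolding VB_eq[OF assms(1) G] VB_eq[OF assms(1) B] .
      show ?thesis by (subst h) (simp add: algebra_simps)
    qed
    finally show ?thesis .
  next
    case False
    have e: "\<And>n. \<delta>^(Suc n) * EE \<pi> b (Suc n) = \<delta> * (\<delta>^n * EE \<pi> b n)"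
      unfolding EE_Suc[OF assms] q_def[symmetric] ET_def using False by simp
    show ?thesis unfolding e ET_def using False summ[OF assms(1)]
      by (simp add: suminf_mult VB_eq[OF assms])
  qed
  show ?thesis using sp f0 tail VB_eq[OF assms] q_def by simp
qed

end

context plan begin

lemma const_pol: "(\<lambda>_. p) \<in> policies" unfolding policies_def using p1 p2 by auto

lemma pol_ne: "policies \<noteq> {}" using const_pol by blast

lemma bdd: "b \<in> {0..1} \<Longrightarrow> bdd_above ((\<lambda>\<pi>. VB \<beta> p C \<delta> \<pi> b) ` policies)"
  using VB_bounds(1) by (intro bdd_aboveI[where M=0]) auto

lemma Vs_upper: "\<pi> \<in> policies \<Longrightarrow> b \<in> {0..1} \<Longrightarrow> VB \<beta> p C \<delta> \<pi> b \<le> Vs b"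
  unfolding VB_opt_def by (rule cSUP_upper[OF _ bdd])

lemma Vs_le0: "b \<in> {0..1} \<Longrightarrow> Vs b \<le> 0"
  unfolding VB_opt_def using VB_bounds(1) pol_ne by (intro cSUP_least) auto

lemma VB_lower_gen: assumes "\<pi> \<in> policies" "b \<in> {0..1}" "\<And>x. - L \<le> ft \<pi> x"
  shows "- L / (1 - \<delta>) \<le> VB \<beta> p C \<delta> \<pi> b"
proof -
  have EL: "- L \<le> EE \<pi> b n" for n
  proof -
    have int: "integrable (measure_pmf (belief_dist \<pi> b n)) (ft \<pi>)"
      using ft_bounds(3)[OF assms(1)] by (intro measure_pmf.integrable_const_bound[where B=K]) auto
    have "measure_pmf.expectation (belief_dist \<pi> b n) (\<lambda>x. - L) \<le> measure_pmf.expectation (belief_dist \<pi> b n) (ft \<pi>)"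
      using assms(3) int by (intro integral_mono) auto
    then show ?thesis unfolding EE_def by simp
  qed
  have s: "summable (\<lambda>i. \<delta>^i * (-L))" using d1 d2 by (intro summable_mult2 summable_geometric) auto
  have "\<And>i. \<delta>^i * (-L) \<le> \<delta>^i * EE \<pi> b i" using EL d1 by (intro mult_left_mono) auto
  then have "(\<Sum>i. \<delta>^i * (- L)) \<le> (\<Sum>i. \<delta>^i * EE \<pi> b i)"
    using suminf_le[OF _ s summ[OF assms(1)]] by blast
  moreover have "(\<Sum>i. \<delta>^i * (- L)) = - L / (1 - \<delta>)"
    using suminf_mult2[of "\<lambda>i. \<delta>^i" "-L"] suminf_geometric[of \<delta>] summable_geometric[of \<delta>] d1 d2 by simp
  ultimately show ?thesis unfolding VB_eq[OF assms(1,2)] by simp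
qed

lemma Vs_ge: assumes "b \<in> {0..1}" shows "- C / (1 - \<delta>) \<le> Vs b"
proof -
  have "\<And>x. - C \<le> ft (\<lambda>_. p) x"
  proof -
    fix x
    show "- C \<le> ft (\<lambda>_. p) x"
    proof (cases "x \<in> {0..1}")
      case True
      have "p \<in> {0..1}" using p1 p2 by auto
      then have "C * probB x p \<le> C" using probB_bounds[OF True] Cpos by (auto intro: mult_left_le)
      then show ?thesis using True unfolding ft_def rB_def using b0 by simp
    qed (use Cpos ft_def in auto)
  qed
  then have "- C / (1 - \<delta>) \<le> VB \<beta> p C \<delta> (\<lambda>_. p) b" by (rule VB_lower_gen[OF const_pol assms])
  also have "\<dots> \<le> Vs b" by (rule Vs_upper[OF const_pol assms])
  finally show ?thesis .
qed

lemma Vs_big: assumes "b \<in> {0..1}" "b > p" shows "Vs b = 0"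
proof -
  have d: "belief_dist (\<lambda>_. p) b n = return_pmf b" for n
    by (induction n) (use assms in \<open>auto simp: trans_def bind_return_pmf\<close>)
  have "rB \<beta> p C b p = 0" using assms b0 unfolding rB_def probB_def by auto
  then have "VB \<beta> p C \<delta> (\<lambda>_. p) b = 0" unfolding VB_def d by simp
  then have "0 \<le> Vs b" using Vs_upper[OF const_pol assms(1)] by simp
  then show ?thesis using Vs_le0[OF assms(1)] by simp
qed

lemma approxA: assumes "b \<in> {0..1}" "\<epsilon> > 0"
  shows "\<exists>q. q \<in> {1/2..1} \<and> Vs b - \<epsilon> < Q Vs b q"
proof -
  have "Vs b - \<epsilon> < Vs b" using assms by simp
  then obtain \<pi> where \<pi>: "\<pi> \<in> policies" "Vs b - \<epsilon> < VB \<beta> p C \<delta> \<pi> b"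
    unfolding VB_opt_def using less_cSUP_iff[OF pol_ne bdd[OF assms(1)]] by auto
  have q: "\<pi> b \<in> {1/2..1}" "\<pi> b \<in> {0..1}" using pol_range[OF \<pi>(1) assms(1)] by auto
  have "ET b (\<pi> b) (VB \<beta> p C \<delta> \<pi>) \<le> ET b (\<pi> b) Vs"
    using Vs_upper[OF \<pi>(1)] by (intro ET_mono[OF assms(1) q(2)])
  then have "VB \<beta> p C \<delta> \<pi> b \<le> Q Vs b (\<pi> b)"
    unfolding VB_rec[OF \<pi>(1) assms(1)] Q_def using d1 by (simp add: mult_left_mono)
  then show ?thesis using \<pi>(2) q by force
qed

end

context plan begin

lemma bellB: assumes x0: "x0 \<in> {0..1}" and q0: "q0 \<in> {1/2..1}"
  shows "Q Vs x0 q0 \<le> Vs x0"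
proof (rule ccontr)
  assume "\<not> Q Vs x0 q0 \<le> Vs x0"
  define c where "c = Q Vs x0 q0 - Vs x0"
  have cpos: "c > 0" using \<open>\<not> Q Vs x0 q0 \<le> Vs x0\<close> c_def by simp
  define \<epsilon> where "\<epsilon> = c * (1 - \<delta>) / 2"
  have epos: "\<epsilon> > 0" unfolding \<epsilon>_def using cpos d2 by (simp add: mult_pos_pos)
  define \<pi> where "\<pi> = (\<lambda>b. if b = x0 then q0 else (SOME q. q \<in> {1/2..1} \<and> Vs b - \<epsilon> < Q Vs b q))"
  have some: "b \<in> {0..1} \<Longrightarrow> b \<noteq> x0 \<Longrightarrow> \<pi> b \<in> {1/2..1} \<and> Vs b - \<epsilon> < Q Vs b (\<pi> b)" for b
    unfolding \<pi>_def using someI_ex[OF approxA[OF _ epos, of b]] by simp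
  have pol: "\<pi> \<in> policies" unfolding policies_def
  proof
    show "\<forall>b\<in>{0..1}. \<pi> b \<in> {1/2..1}" using some q0 \<pi>_def by auto
  qed
  have good: "b \<in> {0..1} \<Longrightarrow> - \<epsilon> \<le> Q Vs b (\<pi> b) - Vs b" for b
  proof (cases "b = x0")
    case True then show ?thesis using cpos epos c_def \<pi>_def by simp
  next
    case False
    assume "b \<in> {0..1}"
    then show ?thesis using some[OF _ False] by simp
  qed
  define g where "g = (\<lambda>b. VB \<beta> p C \<delta> \<pi> b - Vs b)"
  have g_rec: "g b = \<delta> * ET b (\<pi> b) g + (Q Vs b (\<pi> b) - Vs b)" if b: "b \<in> {0..1}" for b
  proof -
    have "ET b (\<pi> b) g = ET b (\<pi> b) (VB \<beta> p C \<delta> \<pi>) - ET b (\<pi> b) Vs"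
      unfolding g_def by (rule ET_diff)
    then have "\<delta> * ET b (\<pi> b) g = \<delta> * ET b (\<pi> b) (VB \<beta> p C \<delta> \<pi>) - \<delta> * ET b (\<pi> b) Vs"
      by (simp add: right_diff_distrib)
    then show ?thesis unfolding Q_def using VB_rec[OF pol b] g_def by simp
  qed
  have glow: "- K / (1 - \<delta>) \<le> g b" if "b \<in> {0..1}" for b
    using VB_bounds(2)[OF pol that] Vs_le0[OF that] unfolding g_def by simp
  define m where "m = Inf (g ` {0..1})"
  have bb: "bdd_below (g ` {0..1})" using glow by (intro bdd_belowI[where m="- K / (1 - \<delta>)"]) auto
  have gm: "m \<le> g b" if "b \<in> {0..1}" for b
    unfolding m_def using bb that by (intro cInf_lower) auto
  have ETm: "m \<le> ET b (\<pi> b) g" if b: "b \<in> {0..1}" for b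
  proof -
    have "ET b (\<pi> b) (\<lambda>_. m) \<le> ET b (\<pi> b) g"
      using gm pol_range(3)[OF pol b] by (intro ET_mono[OF b]) auto
    then show ?thesis by (simp add: ET_const)
  qed
  have all: "\<delta> * m - \<epsilon> \<le> g b" if b: "b \<in> {0..1}" for b
  proof -
    have "\<delta> * m \<le> \<delta> * ET b (\<pi> b) g" using ETm[OF b] d1 by (rule mult_left_mono)
    then show ?thesis using g_rec[OF b] good[OF b] by simp
  qed
  have "\<delta> * m - \<epsilon> \<le> Inf (g ` {0..1})" using all
    by (intro cInf_greatest) auto
  then have "\<delta> * m - \<epsilon> \<le> m" using m_def by simp
  then have "(1 - \<delta>) * (m + c / 2) \<ge> 0" unfolding \<epsilon>_def by (simp add: algebra_simps)
  then have mc: "m + c / 2 \<ge> 0" using d2 by (simp add: zero_le_mult_iff)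
  have "\<delta> * (- c / 2) \<le> \<delta> * m" using mc d1 by (intro mult_left_mono) auto
  moreover have "\<delta> * (c / 2) \<le> c / 2" using d2 cpos by (simp add: mult_left_le_one_le)
  moreover have "\<delta> * m + c \<le> g x0"
  proof -
    have "\<delta> * m \<le> \<delta> * ET x0 (\<pi> x0) g" using ETm[OF x0] d1 by (rule mult_left_mono)
    then show ?thesis using g_rec[OF x0] c_def \<pi>_def by simp
  qed
  moreover have "g x0 \<le> 0" using Vs_upper[OF pol x0] g_def by simp
  ultimately show False using cpos by simp
qed

end


lemma yy_alt: "yy b q = q*b + (1-q)*(1-b)" unfolding yy_def by algebra
lemma zz_alt: "zz b q = (1-q)*b + q*(1-b)" unfolding zz_def by algebra

lemma pB_le: assumes "0 \<le> x" "x \<le> 1" "1/2 \<le> q" "q \<le> 1" "zz x q > 0" shows "pB x q \<le> x"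
proof -
  have "zz x q - (1 - q) = (1-x)*(2*q-1)" unfolding zz_def by algebra
  moreover have "(1-x)*(2*q-1) \<ge> 0" using assms by auto
  ultimately have "1 - q \<le> zz x q" by linarith
  then have "x * (1-q) \<le> x * zz x q" using assms by (intro mult_left_mono) auto
  then have "(1-q) * x \<le> x * zz x q" by (simp add: mult.commute)
  then show ?thesis unfolding pB_def using assms by (simp add: divide_le_eq)
qed

lemma pG_ge: assumes "0 \<le> y" "y \<le> 1" "1/2 \<le> q" "q \<le> 1" "yy y q > 0" shows "y \<le> pG y q"
proof -
  have "q - yy y q = (1-y)*(2*q-1)" unfolding yy_def by algebra
  moreover have "(1-y)*(2*q-1) \<ge> 0" using assms by auto
  ultimately have "yy y q \<le> q" by linarith
  then have "y * yy y q \<le> y * q" using assms by (intro mult_left_mono) auto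
  then have "y * yy y q \<le> q * y" by (simp add: mult.commute)
  then show ?thesis unfolding pG_def using assms by (simp add: le_divide_eq)
qed

lemma cmp_same:
  fixes V :: "real \<Rightarrow> real"
  assumes "0 \<le> x" "x \<le> y" "y \<le> 1" "1/2 \<le> q" "q \<le> 1" "1 - q \<le> x" "y \<le> q"
    and Dl: "\<And>u v. 0 \<le> v \<Longrightarrow> v \<le> u \<Longrightarrow> u \<le> 1 \<Longrightarrow> V u - V v \<ge> -D"
  shows "ET y q V - ET x q V \<ge> -D" "zz y q \<le> zz x q"
proof -
  have x01: "x \<in> {0..1}" and y01: "y \<in> {0..1}" and q01: "q \<in> {0..1}" using assms by auto
  have fx: "fol x q" and fy: "fol y q" using assms unfolding fol_def by auto
  have ydiff: "yy y q - yy x q = (y - x) * (2*q - 1)" unfolding yy_def by algebra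
  have "(y - x) * (2*q - 1) \<ge> 0" using assms by auto
  then have a12: "yy x q \<le> yy y q" using ydiff by simp
  then show "zz y q \<le> zz x q" by (simp add: zz_eq)
  have a1: "0 \<le> yy x q" and a2: "yy y q \<le> 1" using yy_bounds[OF x01 q01] yy_bounds[OF y01 q01] by auto
  have "(a2 * V g2 + (1-a2) * V h2) - (a1 * V g1 + (1-a1) * V h1) \<ge> -D"
    if "a1 = yy x q" "a2 = yy y q" "g1 = pG x q" "g2 = pG y q" "h1 = pB x q" "h2 = pB y q" for a1 a2 g1 g2 h1 h2
  proof (rule coup)
    show "0 \<le> a1" "a1 \<le> a2" "a2 \<le> 1" using that a1 a2 a12 by auto
    show "- D \<le> V g2 - V g1" if "0 < a1"
    proof (rule Dl)
      have p1: "yy x q > 0" "yy y q > 0" using \<open>0 < a1\<close> a12 \<open>a1 = yy x q\<close> by auto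
      have "q*y*yy x q - q*x*yy y q = q*(1-q)*(y-x)" unfolding yy_def by algebra
      moreover have "q*(1-q)*(y-x) \<ge> 0" using assms by auto
      ultimately have "q*x*yy y q \<le> q*y*yy x q" by simp
      then have "q*x/yy x q \<le> q*y/yy y q" using p1 by (simp add: field_simps)
      then show "g1 \<le> g2" using \<open>g1 = pG x q\<close> \<open>g2 = pG y q\<close> unfolding pG_def by simp
      show "0 \<le> g1" "g2 \<le> 1" using pG_bounds[OF x01 q01] pG_bounds[OF y01 q01] \<open>g1 = pG x q\<close> \<open>g2 = pG y q\<close> by auto
    qed
    show "- D \<le> V h2 - V h1" if "a2 < 1"
    proof (rule Dl)
      have p1: "zz y q > 0" "zz x q > 0" using \<open>a2 < 1\<close> a12 \<open>a2 = yy y q\<close> zz_eq[of y q] zz_eq[of x q] by auto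
      have "(1-q)*y*zz x q - (1-q)*x*zz y q = q*(1-q)*(y-x)" unfolding zz_def by algebra
      moreover have "q*(1-q)*(y-x) \<ge> 0" using assms by auto
      ultimately have "(1-q)*x*zz y q \<le> (1-q)*y*zz x q" by simp
      then have "(1-q)*x/zz x q \<le> (1-q)*y/zz y q" using p1 by (simp add: field_simps)
      then show "h1 \<le> h2" using \<open>h1 = pB x q\<close> \<open>h2 = pB y q\<close> unfolding pB_def by simp
      show "0 \<le> h1" "h2 \<le> 1" using pB_bounds[OF x01 q01] pB_bounds[OF y01 q01] \<open>h1 = pB x q\<close> \<open>h2 = pB y q\<close> by auto
    qed
    show "- D \<le> V g2 - V h1" if "a1 < a2"
    proof (rule Dl)
      have p1: "yy y q > 0" "zz x q > 0" using \<open>a1 < a2\<close> a1 a2 that \<open>a1 = yy x q\<close> \<open>a2 = yy y q\<close> zz_eq[of x q] by auto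
      have "h1 \<le> x" using pB_le[OF _ _ _ _ p1(2)] assms \<open>h1 = pB x q\<close> by auto
      moreover have "y \<le> g2" using pG_ge[OF _ _ _ _ p1(1)] assms \<open>g2 = pG y q\<close> by auto
      ultimately show "h1 \<le> g2" using assms by simp
      show "0 \<le> h1" "g2 \<le> 1" using pB_bounds[OF x01 q01] pG_bounds[OF y01 q01] \<open>h1 = pB x q\<close> \<open>g2 = pG y q\<close> by auto
    qed
  qed
  then show "ET y q V - ET x q V \<ge> -D" unfolding ET_def using fx fy by simp
qed



lemma cmp_cross:
  fixes V :: "real \<Rightarrow> real"
  assumes "0 \<le> x" "1/2 \<le> q" "1 - q \<le> x" "x \<le> q" "q < y" "y < 1"
    and Dl: "\<And>u v. 0 \<le> v \<Longrightarrow> v \<le> u \<Longrightarrow> u \<le> 1 \<Longrightarrow> V u - V v \<ge> -D"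
  shows "ET y y V - ET x q V \<ge> -D" "zz y y \<le> zz x q"
proof -
  have x01: "x \<in> {0..1}" and y01: "y \<in> {0..1}" and q01: "q \<in> {0..1}" using assms by auto
  have fx: "fol x q" and fy: "fol y y" using assms unfolding fol_def by auto
  have e1: "zz x q - 2*q*(1-q) = (2*q-1)*(q-x)" unfolding zz_def by algebra
  have e2: "2*q*(1-q) - zz y y = 2*(y-q)*(q+y-1)" unfolding zz_def by algebra
  have "(2*q-1)*(q-x) \<ge> 0" "2*(y-q)*(q+y-1) \<ge> 0" using assms by auto
  then show zle: "zz y y \<le> zz x q" using e1 e2 by linarith
  then have a12: "yy x q \<le> yy y y" by (simp add: zz_eq)
  have a1: "0 \<le> yy x q" and a2: "yy y y \<le> 1" using yy_bounds[OF x01 q01] yy_bounds[OF y01 y01] by auto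
  have zyy: "zz y y = 2*y*(1-y)" unfolding zz_def by algebra
  have zyy_pos: "zz y y > 0" unfolding zyy using assms by auto
  have pByy: "pB y y = 1/2" unfolding pB_def zyy using assms by (simp add: field_simps)
  have pBx: "pB x q \<le> 1/2" if "zz x q > 0"
  proof -
    have "2*((1-q)*x) \<le> zz x q"
    proof -
      have "(1-q)*x \<le> q*(1-x)" using assms by (simp add: algebra_simps)
      then show ?thesis unfolding zz_alt by (simp add: mult.commute)
    qed
    then show ?thesis unfolding pB_def using that by (simp add: field_simps)
  qed
  have yyy: "yy y y = y*y + (1-y)*(1-y)" unfolding yy_def by algebra
  have yyy_pos: "yy y y > 0" unfolding yyy using assms by (simp add: add_pos_nonneg)
  have pGyy: "1/2 \<le> pG y y"
  proof -
    have "(1-y)*(1-y) \<le> y*y" using assms by (intro mult_mono) auto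
    then have "yy y y \<le> 2 * (y * y)" unfolding yyy by simp
    then show ?thesis unfolding pG_def using yyy_pos by (simp add: field_simps)
  qed
  have "(a2 * V g2 + (1-a2) * V h2) - (a1 * V g1 + (1-a1) * V h1) \<ge> -D"
    if "a1 = yy x q" "a2 = yy y y" "g1 = pG x q" "g2 = pG y y" "h1 = pB x q" "h2 = pB y y" for a1 a2 g1 g2 h1 h2
  proof (rule coup)
    show "0 \<le> a1" "a1 \<le> a2" "a2 \<le> 1" using that a1 a2 a12 by auto
    show "- D \<le> V g2 - V g1" if "0 < a1"
    proof (rule Dl)
      have p1: "yy x q > 0" using \<open>0 < a1\<close> \<open>a1 = yy x q\<close> by auto
      have "y*y*yy x q - q*x*yy y y = y*(1-q) * (y*(1-x)) - q*(1-y) * (x*(1-y))" unfolding yy_def by algebra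
      moreover have "q*(1-y) * (x*(1-y)) \<le> y*(1-q) * (y*(1-x))"
      proof (rule mult_mono)
        show "q*(1-y) \<le> y*(1-q)" using assms by (simp add: algebra_simps)
        show "x*(1-y) \<le> y*(1-x)" using assms by (simp add: algebra_simps)
        show "0 \<le> y*(1-q)" "0 \<le> x*(1-y)" using assms by auto
      qed
      ultimately have "q*x*yy y y \<le> y*y*yy x q" by simp
      then have "q*x/yy x q \<le> y*y/yy y y" using p1 yyy_pos by (simp add: field_simps)
      then show "g1 \<le> g2" using \<open>g1 = pG x q\<close> \<open>g2 = pG y y\<close> unfolding pG_def by simp
      show "0 \<le> g1" "g2 \<le> 1" using pG_bounds[OF x01 q01] pG_bounds[OF y01 y01] \<open>g1 = pG x q\<close> \<open>g2 = pG y y\<close> by auto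
    qed
    show "- D \<le> V h2 - V h1" if "a2 < 1"
    proof (rule Dl)
      have "zz x q > 0" using zle zyy_pos by linarith
      then show "h1 \<le> h2" using pBx pByy \<open>h1 = pB x q\<close> \<open>h2 = pB y y\<close> by simp
      show "0 \<le> h1" "h2 \<le> 1" using pB_bounds[OF x01 q01] pB_bounds[OF y01 y01] \<open>h1 = pB x q\<close> \<open>h2 = pB y y\<close> by auto
    qed
    show "- D \<le> V g2 - V h1" if "a1 < a2"
    proof (rule Dl)
      have "zz x q > 0" using zle zyy_pos by linarith
      then show "h1 \<le> g2" using pBx pGyy \<open>h1 = pB x q\<close> \<open>g2 = pG y y\<close> by simp
      show "0 \<le> h1" "g2 \<le> 1" using pB_bounds[OF x01 q01] pG_bounds[OF y01 y01] \<open>h1 = pB x q\<close> \<open>g2 = pG y y\<close> by auto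
    qed
  qed
  then show "ET y y V - ET x q V \<ge> -D" unfolding ET_def using fx fy by simp
qed


lemma arith1: fixes Qy Qx a b dD vx vy \<eta> \<eta>' :: real
  shows "Qy - Qx = a + b \<Longrightarrow> a \<ge> 0 \<Longrightarrow> b \<ge> - dD \<Longrightarrow> Qy \<le> vy \<Longrightarrow> vx - \<eta> < Qx \<Longrightarrow> \<eta> \<le> \<eta>' \<Longrightarrow> vx - vy \<le> dD + \<eta>'"
  by linarith

lemma arith2: fixes Qy Qx a b c dD vx vy \<eta> \<eta>' :: real
  shows "Qy - Qx = c + a + b \<Longrightarrow> c \<ge> 0 \<Longrightarrow> a \<ge> 0 \<Longrightarrow> b \<ge> - dD \<Longrightarrow> Qy \<le> vy \<Longrightarrow> vx - \<eta> < Qx \<Longrightarrow> \<eta> \<le> \<eta>' \<Longrightarrow> vx - vy \<le> dD + \<eta>'"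
  by linarith

context plan begin

lemma rB_fol: "fol b q \<Longrightarrow> rB \<beta> p C b q = - \<beta> \<bar>q - p\<bar> - C * zz b q"
  unfolding rB_def probB_def fol_def by simp

lemma Vs_mono: assumes "x \<in> {0..1}" "y \<in> {0..1}" "x \<le> y" shows "Vs x \<le> Vs y"
proof -
  define S where "S = {Vs x - Vs y | x y. 0 \<le> x \<and> x \<le> y \<and> y \<le> (1::real)}"
  define D where "D = Sup S"
  have "Vs 0 - Vs 0 \<in> S" unfolding S_def by force
  then have Sne: "S \<noteq> {}" by auto
  have Sbdd: "bdd_above S" unfolding S_def
  proof (rule bdd_aboveI[where M="C / (1 - \<delta>)"])
    fix z assume "z \<in> {Vs x - Vs y | x y. 0 \<le> x \<and> x \<le> y \<and> y \<le> (1::real)}"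
    then obtain x y where "z = Vs x - Vs y" "0 \<le> x" "x \<le> y" "y \<le> 1" by auto
    then show "z \<le> C / (1 - \<delta>)" using Vs_le0[of x] Vs_ge[of y] by auto
  qed
  have Su: "Vs x - Vs y \<le> D" if "0 \<le> x" "x \<le> y" "y \<le> 1" for x y
    unfolding D_def using Sbdd that by (intro cSup_upper) (auto simp: S_def)
  have D0: "D \<ge> 0" using Su[of 0 0] by simp
  have Dl: "\<And>u v. 0 \<le> v \<Longrightarrow> v \<le> u \<Longrightarrow> u \<le> 1 \<Longrightarrow> Vs u - Vs v \<ge> -D" using Su by force
  have key: "Vs x - Vs y \<le> \<delta> * D + \<eta> / (1 - \<delta>)" if xy: "0 \<le> x" "x \<le> y" "y \<le> 1" and eta: "\<eta> > 0" for x y \<eta>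
  proof -
    have x01: "x \<in> {0..1}" and y01: "y \<in> {0..1}" using xy by auto
    obtain q where q: "q \<in> {1/2..1}" and qa: "Vs x - \<eta> < Q Vs x q" using approxA[OF x01 eta] by blast
    have eta2: "\<eta> \<le> \<eta> / (1 - \<delta>)" using eta d1 d2 by (simp add: le_divide_eq mult_left_le)
    have dD: "0 \<le> \<delta> * D" using d1 D0 by simp
    have bq: "\<beta> \<bar>q - p\<bar> \<ge> 0" using bnn q p1 p2 by (cases "q \<le> p") auto
    show ?thesis
    proof (cases "x < 1 - q")
      case True
      have "Q Vs x q = - \<beta> \<bar>q - p\<bar> - C + \<delta> * Vs x"
        using True q unfolding Q_def rB_def probB_def ET_def fol_def by auto
      then have "(1 - \<delta>) * Vs x < \<eta> - C" using qa bq by (simp add: algebra_simps)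
      moreover have "- C \<le> (1 - \<delta>) * Vs y"
      proof -
        have "(1 - \<delta>) * (- C / (1 - \<delta>)) \<le> (1 - \<delta>) * Vs y" using Vs_ge[OF y01] d2 by (intro mult_left_mono) auto
        then show ?thesis using d2 by simp
      qed
      ultimately have "(1 - \<delta>) * (Vs x - Vs y) < \<eta>" by (simp add: algebra_simps)
      then have "Vs x - Vs y < \<eta> / (1 - \<delta>)" using d2 by (simp add: less_divide_eq mult.commute)
      then show ?thesis using dD by linarith
    next
      case nB: False
      show ?thesis
      proof (cases "x > q")
        case True
        have "y > q" using True xy by simp
        have Qx: "Q Vs x q = - \<beta> \<bar>q - p\<bar> + \<delta> * Vs x"
          using True q unfolding Q_def rB_def probB_def ET_def fol_def by auto
        have Qy: "Q Vs y q = - \<beta> \<bar>q - p\<bar> + \<delta> * Vs y"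
          using \<open>y > q\<close> q unfolding Q_def rB_def probB_def ET_def fol_def by auto
        have "Q Vs y q \<le> Vs y" by (rule bellB[OF y01 q])
        then have "Vs x - Vs y < \<eta> + \<delta> * (Vs x - Vs y)" using qa Qx Qy by (simp add: algebra_simps)
        moreover have "\<delta> * (Vs x - Vs y) \<le> \<delta> * D" using Su[OF xy] d1 by (rule mult_left_mono)
        ultimately show ?thesis using eta2 by linarith
      next
        case False
        then have fx: "fol x q" using nB unfolding fol_def by simp
        show ?thesis
        proof (cases "y \<le> q")
          case True
          have fy: "fol y q" using fx True xy unfolding fol_def by auto
          have c: "ET y q Vs - ET x q Vs \<ge> -D" "zz y q \<le> zz x q"
            using cmp_same[where V=Vs and D=D and x=x and y=y and q=q, OF _ _ _ _ _ _ True Dl] xy q fx unfolding fol_def by auto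
          have f1: "Q Vs y q - Q Vs x q = C * (zz x q - zz y q) + \<delta> * (ET y q Vs - ET x q Vs)"
            unfolding Q_def rB_fol[OF fx] rB_fol[OF fy] by (simp add: algebra_simps)
          have f2: "C * (zz x q - zz y q) \<ge> 0" using c(2) Cpos by simp
          have "\<delta> * (ET y q Vs - ET x q Vs) \<ge> \<delta> * (-D)" using c(1) d1 by (rule mult_left_mono)
          then have f3: "\<delta> * (ET y q Vs - ET x q Vs) \<ge> - (\<delta> * D)" by simp
          have f4: "Q Vs y q \<le> Vs y" by (rule bellB[OF y01 q])
          show ?thesis by (rule arith1[OF f1 f2 f3 f4 qa eta2])
        next
          case False
          show ?thesis
          proof (cases "y > p")
            case True
            then have "Vs y = 0" using Vs_big[OF y01] by simp
            then show ?thesis using Vs_le0[OF x01] dD eta2 eta by simp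
          next
            case ny: False
            have qy: "q < y" "y < 1" using False ny p2 by auto
            have fy: "fol y y" using qy q unfolding fol_def by auto
            have c: "ET y y Vs - ET x q Vs \<ge> -D" "zz y y \<le> zz x q"
              using cmp_cross[where V=Vs and D=D and x=x and y=y and q=q, OF _ _ _ _ qy Dl] xy q fx unfolding fol_def by auto
            have bb: "\<beta> \<bar>y - p\<bar> \<le> \<beta> \<bar>q - p\<bar>"
            proof -
              have "\<bar>y - p\<bar> = p - y" "\<bar>q - p\<bar> = p - q" using qy ny by auto
              moreover have "\<beta> (p - y) \<le> \<beta> (p - q)" using qy ny q p1 p2 by (intro mono_onD[OF bmono]) auto
              ultimately show ?thesis by simp
            qed
            have f1: "Q Vs y y - Q Vs x q = (\<beta> \<bar>q - p\<bar> - \<beta> \<bar>y - p\<bar>) + C * (zz x q - zz y y) + \<delta> * (ET y y Vs - ET x q Vs)"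
              unfolding Q_def rB_fol[OF fx] rB_fol[OF fy] by (simp add: algebra_simps)
            have f2: "C * (zz x q - zz y y) \<ge> 0" using c(2) Cpos by simp
            have "\<delta> * (ET y y Vs - ET x q Vs) \<ge> \<delta> * (-D)" using c(1) d1 by (rule mult_left_mono)
            then have f3: "\<delta> * (ET y y Vs - ET x q Vs) \<ge> - (\<delta> * D)" by simp
            have f4: "Q Vs y y \<le> Vs y" using qy q by (intro bellB[OF y01]) auto
            have f0: "\<beta> \<bar>q - p\<bar> - \<beta> \<bar>y - p\<bar> \<ge> 0" using bb by simp
            show ?thesis by (rule arith2[OF f1 f0 f2 f3 f4 qa eta2])
          qed
        qed
      qed
    qed
  qed
  have "D \<le> 0"
  proof (rule ccontr)
    assume "\<not> D \<le> 0"
    then have Dp: "D > 0" by simp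
    define \<eta> where "\<eta> = (1 - \<delta>) * (1 - \<delta>) * D / 2"
    have eta: "\<eta> > 0" unfolding \<eta>_def using Dp d2 by simp
    have "Sup S \<le> \<delta> * D + \<eta> / (1 - \<delta>)"
      using key[OF _ _ _ eta] Sne by (intro cSup_least) (auto simp: S_def)
    then have h1: "D \<le> \<delta> * D + \<eta> / (1 - \<delta>)" unfolding D_def .
    have h2: "\<eta> / (1 - \<delta>) = (1 - \<delta>) * D / 2" unfolding \<eta>_def using d2 by (simp add: field_simps)
    have h3: "(1 - \<delta>) * D = D - \<delta> * D" by (simp add: left_diff_distrib)
    have h4: "(1 - \<delta>) * D > 0" using Dp d2 by simp
    from h1 h2 have "D \<le> \<delta> * D + (1 - \<delta>) * D / 2" by simp
    then show False using h3 h4 by linarith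
  qed
  then show ?thesis using Su[of x y] assms by auto
qed

end

theorem lemma15:
  fixes \<beta> :: "real \<Rightarrow> real" and p C \<delta> b1 b2 :: real
  assumes "p \<in> {1/2..<1}"
    and "\<forall>x\<in>{0..1}. \<beta> x \<ge> 0"
    and "mono_on {0..1} \<beta>"
    and "continuous_on {0..1} \<beta>"
    and "concave_on {0..1} \<beta>"
    and "\<beta> 0 = 0"
    and "C > 0"
    and "\<delta> \<in> {0..<1}"
    and "b1 \<in> {0..1}" and "b2 \<in> {0..1}" and "b1 \<le> b2"
  shows "VB_opt \<beta> p C \<delta> b1 \<le> VB_opt \<beta> p C \<delta> b2"
proof -
  interpret plan \<beta> p C \<delta> using assms by unfold_locales auto
  show ?thesis using Vs_mono assms(9-11) by blast
qed

end
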